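(* Let $\mathbf v\in E^*_{[s,t]}V$ be nonzero with $L_1\mathbf v=L_2\mathbf v=\mathbf 0$, let $r=d-s-t$, $m_1=r-s$, $m_2=s-t$. Then $m_1,m_2\ge 0$, i.e. $r\ge s\ge t$, and: (i) $(r,s,t)=(m_1+m_2+t,\;m_2+t,\;t)$; (ii) $t\in\{0,1,\dots,\lfloor d/3\rfloor\}$; (iii) $m_1=d-3t-2m_2$; (iv) $m_2\in\{0,1,\dots,\lfloor (d-3t)/2\rfloor\}$.
   Context: Let $d\ge1$, $\mathbb F_3=\{0,1,2\}$, $X=\mathbb F_3^d$, $V=\mathbb C^X$ with standard basis $\{\hat y:y\in X\}$. $E^*_{[s,t]}$ is the diagonal projection onto the span of those $\hat y$ with $y$ having exactly $s$ coordinates equal to $1$ and $t$ equal to $2$. Define linear operators on $V$: $L_1\hat y$ is the sum of $\hat z$ over all $z$ obtained from $y$ by changing exactly one coordinate equal to $1$ into $0$ (empty sum $=0$), and $L_2$ similarly changes one coordinate $2\mapsto 1$. *)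

theory Defs
  imports Complex_Main
begin

text \<open>Points of X = F_3^d are lists of length d with entries in {0,1,2}.
  Vectors of V = C^X are functions from lists to complex numbers that vanish
  outside X.\<close>

definition Xset :: "nat \<Rightarrow> nat list set" where
  "Xset d = {y. length y = d \<and> set y \<subseteq> {0,1,2}}"

definition in_V :: "nat \<Rightarrow> (nat list \<Rightarrow> complex) \<Rightarrow> bool" where
  "in_V d v \<longleftrightarrow> (\<forall>y. y \<notin> Xset d \<longrightarrow> v y = 0)"

definition cnt :: "nat \<Rightarrow> nat list \<Rightarrow> nat" where
  "cnt a y = length (filter (\<lambda>x. x = a) y)"

definition in_Estar :: "nat \<Rightarrow> nat \<Rightarrow> nat \<Rightarrow> (nat list \<Rightarrow> complex) \<Rightarrow> bool" where
  "in_Estar d s t v \<longleftrightarrow> in_V d v \<and>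
     (\<forall>y. v y \<noteq> 0 \<longrightarrow> cnt 1 y = s \<and> cnt 2 y = t)"

definition basis_vec :: "nat list \<Rightarrow> nat list \<Rightarrow> complex" where
  "basis_vec y = (\<lambda>z. if z = y then 1 else 0)"

definition Lop :: "nat \<Rightarrow> nat \<Rightarrow> (nat list \<Rightarrow> complex) \<Rightarrow> (nat list \<Rightarrow> complex)" where
  "Lop d a v = (\<lambda>z. \<Sum>y\<in>Xset d. v y *
      (\<Sum>i\<in>{i. i < d \<and> y ! i = a}. basis_vec (y[i := a - 1]) z))"

definition L1 :: "nat \<Rightarrow> (nat list \<Rightarrow> complex) \<Rightarrow> (nat list \<Rightarrow> complex)" where
  "L1 d = Lop d 1"

definition L2 :: "nat \<Rightarrow> (nat list \<Rightarrow> complex) \<Rightarrow> (nat list \<Rightarrow> complex)" where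
  "L2 d = Lop d 2"

end

theory Submission imports Defs begin

definition P :: "nat \<Rightarrow> nat \<Rightarrow> nat \<Rightarrow> (nat list \<Rightarrow> complex) \<Rightarrow> nat list \<Rightarrow> complex" where
  "P n a b g z = (\<Sum>i<n. if z ! i = b then g (z[i := a]) else 0)"

lemma finite_X: "finite (Xset d)"
proof -
  have "Xset d = {xs. set xs \<subseteq> {0,1,2} \<and> length xs = d}" unfolding Xset_def by auto
  thus ?thesis using finite_lists_length_eq[of "{0,1,2::nat}" d] by simp
qed

lemma X_upd: "z \<in> Xset d \<Longrightarrow> a \<le> 2 \<Longrightarrow> z[i := a] \<in> Xset d"
  unfolding Xset_def using set_update_subset_insert[of z i a] by auto

lemma X_len: "z \<in> Xset d \<Longrightarrow> length z = d" unfolding Xset_def by auto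

lemma cnt_sum: "set xs \<subseteq> {0,1,2} \<Longrightarrow> length xs = cnt 0 xs + cnt 1 xs + cnt 2 xs"
  unfolding cnt_def by (induction xs) auto

lemma sum_if_const: "(\<Sum>i<n. if (z::nat list) ! i = b then (c::complex) else 0) = of_nat (card {i. i < n \<and> z ! i = b}) * c"
proof -
  have "(\<Sum>i<n. if z ! i = b then c else 0) = (\<Sum>i\<in>{i\<in>{..<n}. z ! i = b}. c)"
    by (simp add: sum.inter_filter[symmetric])
  also have "\<dots> = of_nat (card {i\<in>{..<n}. z ! i = b}) * c" by simp
  also have "{i\<in>{..<n}. z ! i = b} = {i. i < n \<and> z ! i = b}" by auto
  finally show ?thesis .
qed

lemma step:
  assumes "a \<noteq> b" "i < length z" "z ! i = b" "length z = n"
  shows "P n b a f (z[i := a]) = f z + (\<Sum>j<n. if j \<noteq> i \<and> z ! j = a then f (z[i := a, j := b]) else 0)"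
proof -
  have "P n b a f (z[i := a]) = (\<Sum>j<n. (if j = i then f z else 0) + (if j \<noteq> i \<and> z ! j = a then f (z[i := a, j := b]) else 0))"
    unfolding P_def
  proof (rule sum.cong[OF refl])
    fix j assume "j \<in> {..<n}"
    show "(if z[i := a] ! j = a then f (z[i := a, j := b]) else 0) = (if j = i then f z else 0) + (if j \<noteq> i \<and> z ! j = a then f (z[i := a, j := b]) else 0)"
      using assms by (cases "j = i") (auto simp: nth_list_update)
  qed
  also have "\<dots> = f z + (\<Sum>j<n. if j \<noteq> i \<and> z ! j = a then f (z[i := a, j := b]) else 0)"
    using assms by (simp add: sum.distrib)
  finally show ?thesis .
qed

lemma comm:
  assumes "a \<noteq> b" "length z = n"
  shows "P n a b (P n b a f) z - P n b a (P n a b f) z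
     = (of_nat (card {i. i < n \<and> z ! i = b}) - of_nat (card {i. i < n \<and> z ! i = a})) * f z"
proof -
  define F where "F i j = f (z[i := a, j := b])" for i j
  have A: "P n a b (P n b a f) z = (\<Sum>i<n. if z ! i = b then f z else 0)
       + (\<Sum>i<n. \<Sum>j<n. if z ! i = b \<and> j \<noteq> i \<and> z ! j = a then F i j else 0)"
  proof -
    have "P n a b (P n b a f) z = (\<Sum>i<n. (if z ! i = b then f z else 0) + (\<Sum>j<n. if z ! i = b \<and> j \<noteq> i \<and> z ! j = a then F i j else 0))"
      unfolding P_def[of n a b]
    proof (rule sum.cong[OF refl])
      fix i assume i: "i \<in> {..<n}"
      show "(if z ! i = b then P n b a f (z[i := a]) else 0) = (if z ! i = b then f z else 0) + (\<Sum>j<n. if z ! i = b \<and> j \<noteq> i \<and> z ! j = a then F i j else 0)"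
        unfolding F_def using step[of a b i z n f] assms i by auto
    qed
    thus ?thesis by (simp add: sum.distrib)
  qed
  have B: "P n b a (P n a b f) z = (\<Sum>j<n. if z ! j = a then f z else 0)
       + (\<Sum>j<n. \<Sum>i<n. if z ! j = a \<and> i \<noteq> j \<and> z ! i = b then F i j else 0)"
  proof -
    have "P n b a (P n a b f) z = (\<Sum>j<n. (if z ! j = a then f z else 0) + (\<Sum>i<n. if z ! j = a \<and> i \<noteq> j \<and> z ! i = b then F i j else 0))"
      unfolding P_def[of n b a]
    proof (rule sum.cong[OF refl])
      fix j assume j: "j \<in> {..<n}"
      have "\<And>i. i \<noteq> j \<Longrightarrow> z[j := b, i := a] = z[i := a, j := b]" by (simp add: list_update_swap)
      then show "(if z ! j = a then P n a b f (z[j := b]) else 0) = (if z ! j = a then f z else 0) + (\<Sum>i<n. if z ! j = a \<and> i \<noteq> j \<and> z ! i = b then F i j else 0)"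
        unfolding F_def using step[of b a j z n f] assms j by (auto intro!: sum.cong)
    qed
    thus ?thesis by (simp add: sum.distrib)
  qed
  have C: "(\<Sum>j<n. \<Sum>i<n. if z ! j = a \<and> i \<noteq> j \<and> z ! i = b then F i j else 0)
     = (\<Sum>i<n. \<Sum>j<n. if z ! i = b \<and> j \<noteq> i \<and> z ! j = a then F i j else 0)"
    by (subst sum.swap) (auto intro!: sum.cong)
  show ?thesis unfolding A B C sum_if_const by (simp add: algebra_simps)
qed


lemma adj:
  assumes "a \<le> 2" "b \<le> 2"
  shows "(\<Sum>z\<in>Xset d. cnj (h z) * P d a b g z) = (\<Sum>y\<in>Xset d. g y * cnj (P d b a h y))"
proof -
  have L: "(\<Sum>z\<in>Xset d. cnj (h z) * P d a b g z) = (\<Sum>i<d. \<Sum>z\<in>{z\<in>Xset d. z ! i = b}. cnj (h z) * g (z[i := a]))"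
    unfolding P_def sum_distrib_left
    by (subst sum.swap) (simp add: sum.inter_filter finite_X if_distrib cong: if_cong)
  have R: "(\<Sum>y\<in>Xset d. g y * cnj (P d b a h y)) = (\<Sum>i<d. \<Sum>y\<in>{y\<in>Xset d. y ! i = a}. g y * cnj (h (y[i := b])))"
    unfolding P_def cnj_sum sum_distrib_left
    by (subst sum.swap) (simp add: sum.inter_filter finite_X if_distrib cong: if_cong)
  have "(\<Sum>z\<in>{z\<in>Xset d. z ! i = b}. cnj (h z) * g (z[i := a])) = (\<Sum>y\<in>{y\<in>Xset d. y ! i = a}. g y * cnj (h (y[i := b])))"
    if i: "i < d" for i
  proof (rule sum.reindex_bij_witness[where i = "\<lambda>y. y[i := b]" and j = "\<lambda>z. z[i := a]"])
    fix y assume "y \<in> {y\<in>Xset d. y ! i = a}"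
    then show "y[i := b, i := a] = y" "y[i := b] \<in> {z\<in>Xset d. z ! i = b}"
      using X_upd[of y d b i] X_len[of y d] assms i by auto
  next
    fix z assume "z \<in> {z\<in>Xset d. z ! i = b}"
    then show "z[i := a, i := b] = z" "z[i := a] \<in> {y\<in>Xset d. y ! i = a}"
      using X_upd[of z d a i] X_len[of z d] assms i by auto
  next
    fix z assume "z \<in> {z\<in>Xset d. z ! i = b}"
    then show "g (z[i := a]) * cnj (h (z[i := a, i := b])) = cnj (h z) * g (z[i := a])"
      using X_len[of z d] i by auto
  qed
  then show ?thesis unfolding L R by (intro sum.cong[OF refl]) simp
qed

lemma Lop_P:
  assumes "z \<in> Xset d" "1 \<le> a" "a \<le> 2"
  shows "Lop d a v z = P d a (a - 1) v z"
proof -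
  have "Lop d a v z = (\<Sum>y\<in>Xset d. \<Sum>i<d. if y ! i = a \<and> z = y[i := a - 1] then v y else 0)"
    unfolding Lop_def basis_vec_def sum_distrib_left
  proof (rule sum.cong[OF refl])
    fix y assume "y \<in> Xset d"
    have "{i. i < d \<and> y ! i = a} = {i\<in>{..<d}. y ! i = a}" by auto
    then have "(\<Sum>i\<in>{i. i < d \<and> y ! i = a}. v y * (if z = y[i := a - 1] then 1 else 0)) =
         (\<Sum>i<d. if y ! i = a then v y * (if z = y[i := a - 1] then 1 else 0) else 0)"
      using sum.inter_filter[of "{..<d}" "\<lambda>i. v y * (if z = y[i := a - 1] then 1 else 0)" "\<lambda>i. y ! i = a"]
      by simp
    also have "\<dots> = (\<Sum>i<d. if y ! i = a \<and> z = y[i := a - 1] then v y else 0)"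
      by (rule sum.cong[OF refl]) simp
    finally show "(\<Sum>i\<in>{i. i < d \<and> y ! i = a}. v y * (if z = y[i := a - 1] then 1 else 0)) =
         (\<Sum>i<d. if y ! i = a \<and> z = y[i := a - 1] then v y else 0)" .
  qed
  also have "\<dots> = (\<Sum>i<d. \<Sum>y\<in>Xset d. if y ! i = a \<and> z = y[i := a - 1] then v y else 0)"
    by (rule sum.swap)
  also have "\<dots> = (\<Sum>i<d. if z ! i = a - 1 then v (z[i := a]) else 0)"
  proof (rule sum.cong[OF refl])
    fix i assume i: "i \<in> {..<d}"
    have "(\<Sum>y\<in>Xset d. if y ! i = a \<and> z = y[i := a - 1] then v y else 0)
        = (\<Sum>y\<in>Xset d. if z ! i = a - 1 then (if y = z[i := a] then v y else 0) else 0)"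
    proof (rule sum.cong[OF refl])
      fix y assume y: "y \<in> Xset d"
      have ly: "length y = d" "length z = d" using X_len y assms(1) by auto
      have "(y ! i = a \<and> z = y[i := a - 1]) \<longleftrightarrow> (z ! i = a - 1 \<and> y = z[i := a])"
      proof
        assume h: "y ! i = a \<and> z = y[i := a - 1]"
        then have "z ! i = a - 1" using ly i by simp
        moreover have "z[i := a] = y" using h list_update_id[of y i] by simp
        ultimately show "z ! i = a - 1 \<and> y = z[i := a]" by simp
      next
        assume h: "z ! i = a - 1 \<and> y = z[i := a]"
        then have "y ! i = a" using ly i by simp
        moreover have "y[i := a - 1] = z" using h list_update_id[of z i] by simp
        ultimately show "y ! i = a \<and> z = y[i := a - 1]" by simp
      qed
      then show "(if y ! i = a \<and> z = y[i := a - 1] then v y else 0) = (if z ! i = a - 1 then (if y = z[i := a] then v y else 0) else 0)"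
        by auto
    qed
    also have "\<dots> = (if z ! i = a - 1 then v (z[i := a]) else 0)"
      using X_upd[of z d a i] assms by (simp add: finite_X sum.delta')
    finally show "(\<Sum>y\<in>Xset d. if y ! i = a \<and> z = y[i := a - 1] then v y else 0) = (if z ! i = a - 1 then v (z[i := a]) else 0)" .
  qed
  finally show ?thesis unfolding P_def .
qed


lemma kb:
  assumes ab: "a \<le> 2" "b \<le> 2" "a \<noteq> b"
    and supp: "\<And>y. y \<notin> Xset d \<Longrightarrow> v y = 0"
    and ker: "\<And>z. z \<in> Xset d \<Longrightarrow> P d a b v z = 0"
    and cnts: "\<And>z. v z \<noteq> 0 \<Longrightarrow> card {i. i < d \<and> z ! i = a} = ka \<and> card {i. i < d \<and> z ! i = b} = kb"
    and nz: "v \<noteq> (\<lambda>_. 0)"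
  shows "ka \<le> kb"
proof -
  define g where "g = P d b a v"
  define k :: real where "k = real kb - real ka"
  have Pg: "P d a b g z = complex_of_real k * v z" if z: "z \<in> Xset d" for z
  proof -
    have "P d b a (P d a b v) z = 0"
      unfolding P_def[of d b a] using ker[OF X_upd[OF z ab(2)]] by (intro sum.neutral) simp
    moreover have "P d a b g z - P d b a (P d a b v) z
        = (of_nat (card {i. i < d \<and> z ! i = b}) - of_nat (card {i. i < d \<and> z ! i = a})) * v z"
      unfolding g_def by (rule comm) (use ab X_len[OF z] in auto)
    ultimately have "P d a b g z = (of_nat (card {i. i < d \<and> z ! i = b}) - of_nat (card {i. i < d \<and> z ! i = a})) * v z"
      by simp
    then show ?thesis using cnts[of z] unfolding k_def by (cases "v z = 0") auto
  qed
  define A where "A = (\<Sum>z\<in>Xset d. (cmod (v z))\<^sup>2)"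
  define B where "B = (\<Sum>z\<in>Xset d. (cmod (g z))\<^sup>2)"
  have "(\<Sum>z\<in>Xset d. cnj (v z) * P d a b g z) = complex_of_real k * complex_of_real A"
    unfolding A_def of_real_sum sum_distrib_left
  proof (intro sum.cong refl)
    fix z assume z: "z \<in> Xset d"
    have "cnj (v z) * P d a b g z = complex_of_real k * (v z * cnj (v z))"
      by (simp add: Pg[OF z])
    then show "cnj (v z) * P d a b g z = complex_of_real k * complex_of_real ((cmod (v z))\<^sup>2)"
      by (simp only: complex_norm_square)
  qed
  moreover have "(\<Sum>z\<in>Xset d. cnj (v z) * P d a b g z) = complex_of_real B"
    unfolding adj[OF ab(1,2)] B_def of_real_sum
    by (intro sum.cong refl) (simp only: g_def complex_norm_square)
  ultimately have "B = k * A"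
    by (metis of_real_eq_iff of_real_mult)
  moreover have "B \<ge> 0" unfolding B_def by (intro sum_nonneg) simp
  moreover have "A > 0"
  proof -
    obtain y where y: "v y \<noteq> 0" using nz by auto
    then have yX: "y \<in> Xset d" using supp by blast
    have "0 < (cmod (v y))\<^sup>2" using y by simp
    also have "\<dots> \<le> A" unfolding A_def
      by (rule member_le_sum) (use yX finite_X in auto)
    finally show ?thesis .
  qed
  ultimately have "k \<ge> 0"
    by (metis mult_neg_pos not_le)
  then show ?thesis unfolding k_def by simp
qed


theorem lemma3p6:
  fixes d s t :: nat and v :: "nat list \<Rightarrow> complex"
  assumes "d \<ge> 1"
    and "in_Estar d s t v"
    and "v \<noteq> (\<lambda>_. 0)"
    and "L1 d v = (\<lambda>_. 0)"
    and "L2 d v = (\<lambda>_. 0)"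
  shows "let r = int d - int s - int t; m1 = r - int s; m2 = int s - int t in
    m1 \<ge> 0 \<and> m2 \<ge> 0 \<and> r \<ge> int s \<and> int s \<ge> int t \<and>
    (r, int s, int t) = (m1 + m2 + int t, m2 + int t, int t) \<and>
    int t \<in> {0 .. int d div 3} \<and>
    m1 = int d - 3 * int t - 2 * m2 \<and>
    m2 \<in> {0 .. (int d - 3 * int t) div 2}"
proof -
  have supp: "\<And>y. y \<notin> Xset d \<Longrightarrow> v y = 0"
    using assms(2) unfolding in_Estar_def in_V_def by auto
  have cardc: "card {i. i < d \<and> z ! i = a} = cnt a z" if "z \<in> Xset d" for z a
    unfolding cnt_def length_filter_conv_card using X_len[OF that] by simp
  have sup: "cnt 1 z = s \<and> cnt 2 z = t \<and> cnt 0 z = d - s - t \<and> s + t \<le> d \<and> z \<in> Xset d"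
    if "v z \<noteq> 0" for z
  proof -
    have zX: "z \<in> Xset d" using supp that by blast
    have c: "cnt 1 z = s" "cnt 2 z = t" using assms(2) that unfolding in_Estar_def by auto
    have "d = cnt 0 z + cnt 1 z + cnt 2 z" using cnt_sum[of z] zX unfolding Xset_def by auto
    then show ?thesis using c zX by auto
  qed
  obtain z0 where "v z0 \<noteq> 0" using assms(3) by auto
  then have std: "s + t \<le> d" using sup by blast
  have k1: "s \<le> d - s - t"
  proof (rule kb[of 1 0 d v])
    show "\<And>z. z \<in> Xset d \<Longrightarrow> P d 1 0 v z = 0"
      using Lop_P[of _ d 1 v] assms(4) unfolding L1_def by (metis diff_self_eq_0 le_refl one_le_numeral)
    show "\<And>z. v z \<noteq> 0 \<Longrightarrow> card {i. i < d \<and> z ! i = 1} = s \<and> card {i. i < d \<and> z ! i = 0} = d - s - t"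
      using sup cardc by metis
  qed (use supp assms(3) in auto)
  have k2: "t \<le> s"
  proof (rule kb[of 2 1 d v])
    show "\<And>z. z \<in> Xset d \<Longrightarrow> P d 2 1 v z = 0"
    proof -
      fix z assume "z \<in> Xset d"
      then have "Lop d 2 v z = P d 2 (2 - 1) v z" by (rule Lop_P) auto
      then show "P d 2 1 v z = 0" using assms(5) unfolding L2_def by (metis diff_add_inverse2 one_add_one)
    qed
    show "\<And>z. v z \<noteq> 0 \<Longrightarrow> card {i. i < d \<and> z ! i = 2} = t \<and> card {i. i < d \<and> z ! i = 1} = s"
      using sup cardc by metis
  qed (use supp assms(3) in auto)
  have a1: "3 * int t \<le> int d" "2 * int s + int t \<le> int d" "int t \<le> int s" using k1 k2 std by auto
  have a2: "int t \<le> int d div 3" using a1 by linarith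
  have a3: "int s - int t \<le> (int d - 3 * int t) div 2" using a1 by linarith
  show ?thesis using a1 a2 a3 by (simp add: Let_def)
qed

end
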